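(* Let $(x_0^*,x^*,y^* )$ be a basic optimal solution to Problem (II) defined in the context, and let $S^*=\{i\in\mathcal N:x_i^*\ne0\}$. Then $S^*$ is an optimal solution to Problem (I) defined in the context.
   Context: Let $\mathcal N=\{1,\dots,N\}$, $\mathcal K=\{1,\dots,K\}$. Data: $\hat v_i>0$, $r_i\in[0,1]$, $a(i,k)\in[0,1]$, multipliers $\mu_k\ge0$, and $\varepsilon_i=(\sqrt N+1)\Psi/\sqrt{n_i}$ with positive integers $n_i$ and a constant $\Psi>0$. Problem (I): maximize over $S\subseteq\mathcal N$ the quantity $\sum_{i\in S}\Big[r_i\Big(\frac{\hat v_i}{1+\sum_{j\in S}\hat v_j}+\varepsilon_i\Big)-\sum_{k\in\mathcal K}a(i,k)\mu_k\Big(\frac{\hat v_i}{1+\sum_{j\in S}\hat v_j}-\varepsilon_i\Big)\Big]$. Problem (II): maximize over $(x_0,x,y)\in\mathbb R\times\mathbb R_+^N\times\mathbb R_+^{N\times N}$ the quantity $\sum_{i\in\mathcal N}\Big[r_i\Big((\hat v_i+\varepsilon_i)x_i+\varepsilon_i\sum_{j\in\mathcal N}\hat v_jy_{ij}\Big)-\sum_{k\in\mathcal K}a(i,k)\mu_k\Big((\hat v_i-\varepsilon_i)x_i-\varepsilon_i\sum_{j\in\mathcal N}\hat v_jy_{ij}\Big)\Big]$ subject to $x_0+\sum_i\hat v_ix_i=1$, $x_i\le x_0$ for all $i$, and $y_{ij}\le x_i$, $y_{ij}\le x_j$ for all $i,j$. *)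

theory Defs
  imports Complex_Main
begin

text \<open>Index sets are {1..N} (products) and {1..K} (constraints).
  Data: vh i = hat v_i, r i, a i k, mu k, n i (positive integers), Psi.\<close>

definition eps :: "nat \<Rightarrow> real \<Rightarrow> (nat \<Rightarrow> nat) \<Rightarrow> nat \<Rightarrow> real" where
  "eps N Psi n i = (sqrt (real N) + 1) * Psi / sqrt (real (n i))"

definition objI ::
  "nat \<Rightarrow> nat \<Rightarrow> (nat \<Rightarrow> real) \<Rightarrow> (nat \<Rightarrow> real) \<Rightarrow> (nat \<Rightarrow> nat \<Rightarrow> real)
   \<Rightarrow> (nat \<Rightarrow> real) \<Rightarrow> (nat \<Rightarrow> nat) \<Rightarrow> real \<Rightarrow> nat set \<Rightarrow> real" where
  "objI N K vh r a mu n Psi S =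
     (\<Sum>i\<in>S. r i * (vh i / (1 + (\<Sum>j\<in>S. vh j)) + eps N Psi n i)
             - (\<Sum>k\<in>{1..K}. a i k * mu k * (vh i / (1 + (\<Sum>j\<in>S. vh j)) - eps N Psi n i)))"

definition optimalI ::
  "nat \<Rightarrow> nat \<Rightarrow> (nat \<Rightarrow> real) \<Rightarrow> (nat \<Rightarrow> real) \<Rightarrow> (nat \<Rightarrow> nat \<Rightarrow> real)
   \<Rightarrow> (nat \<Rightarrow> real) \<Rightarrow> (nat \<Rightarrow> nat) \<Rightarrow> real \<Rightarrow> nat set \<Rightarrow> bool" where
  "optimalI N K vh r a mu n Psi S \<longleftrightarrow>
     S \<subseteq> {1..N} \<and>
     (\<forall>T. T \<subseteq> {1..N} \<longrightarrow> objI N K vh r a mu n Psi T \<le> objI N K vh r a mu n Psi S)"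

definition objII ::
  "nat \<Rightarrow> nat \<Rightarrow> (nat \<Rightarrow> real) \<Rightarrow> (nat \<Rightarrow> real) \<Rightarrow> (nat \<Rightarrow> nat \<Rightarrow> real)
   \<Rightarrow> (nat \<Rightarrow> real) \<Rightarrow> (nat \<Rightarrow> nat) \<Rightarrow> real
   \<Rightarrow> real \<Rightarrow> (nat \<Rightarrow> real) \<Rightarrow> (nat \<Rightarrow> nat \<Rightarrow> real) \<Rightarrow> real" where
  "objII N K vh r a mu n Psi x0 x y =
     (\<Sum>i\<in>{1..N}.
        r i * ((vh i + eps N Psi n i) * x i + eps N Psi n i * (\<Sum>j\<in>{1..N}. vh j * y i j))
      - (\<Sum>k\<in>{1..K}. a i k * mu k *
           ((vh i - eps N Psi n i) * x i - eps N Psi n i * (\<Sum>j\<in>{1..N}. vh j * y i j))))"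

text \<open>Feasible region of Problem (II) (only coordinates indexed by {1..N} matter).\<close>
definition feasII ::
  "nat \<Rightarrow> (nat \<Rightarrow> real) \<Rightarrow> real \<Rightarrow> (nat \<Rightarrow> real) \<Rightarrow> (nat \<Rightarrow> nat \<Rightarrow> real) \<Rightarrow> bool" where
  "feasII N vh x0 x y \<longleftrightarrow>
     x0 + (\<Sum>i\<in>{1..N}. vh i * x i) = 1 \<and>
     (\<forall>i\<in>{1..N}. 0 \<le> x i \<and> x i \<le> x0) \<and>
     (\<forall>i\<in>{1..N}. \<forall>j\<in>{1..N}. 0 \<le> y i j \<and> y i j \<le> x i \<and> y i j \<le> x j)"

text \<open>Basic solution of Problem (II): a feasible point at which the active constraints
  have full rank, i.e. the only direction (d0, dx, dy) in the variable space
  R x R^N x R^(N x N) annihilated by all active constraints is zero.\<close>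
definition basicII ::
  "nat \<Rightarrow> (nat \<Rightarrow> real) \<Rightarrow> real \<Rightarrow> (nat \<Rightarrow> real) \<Rightarrow> (nat \<Rightarrow> nat \<Rightarrow> real) \<Rightarrow> bool" where
  "basicII N vh x0 x y \<longleftrightarrow>
     feasII N vh x0 x y \<and>
     (\<forall>(d0::real) (dx::nat \<Rightarrow> real) (dy::nat \<Rightarrow> nat \<Rightarrow> real).
        d0 + (\<Sum>i\<in>{1..N}. vh i * dx i) = 0 \<and>
        (\<forall>i\<in>{1..N}. x i = 0 \<longrightarrow> dx i = 0) \<and>
        (\<forall>i\<in>{1..N}. x i = x0 \<longrightarrow> dx i = d0) \<and>
        (\<forall>i\<in>{1..N}. \<forall>j\<in>{1..N}. y i j = 0 \<longrightarrow> dy i j = 0) \<and>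
        (\<forall>i\<in>{1..N}. \<forall>j\<in>{1..N}. y i j = x i \<longrightarrow> dy i j = dx i) \<and>
        (\<forall>i\<in>{1..N}. \<forall>j\<in>{1..N}. y i j = x j \<longrightarrow> dy i j = dx j)
        \<longrightarrow> d0 = 0 \<and> (\<forall>i\<in>{1..N}. dx i = 0) \<and> (\<forall>i\<in>{1..N}. \<forall>j\<in>{1..N}. dy i j = 0))"

definition optimalII ::
  "nat \<Rightarrow> nat \<Rightarrow> (nat \<Rightarrow> real) \<Rightarrow> (nat \<Rightarrow> real) \<Rightarrow> (nat \<Rightarrow> nat \<Rightarrow> real)
   \<Rightarrow> (nat \<Rightarrow> real) \<Rightarrow> (nat \<Rightarrow> nat) \<Rightarrow> real
   \<Rightarrow> real \<Rightarrow> (nat \<Rightarrow> real) \<Rightarrow> (nat \<Rightarrow> nat \<Rightarrow> real) \<Rightarrow> bool" where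
  "optimalII N K vh r a mu n Psi x0 x y \<longleftrightarrow>
     feasII N vh x0 x y \<and>
     (\<forall>x0' x' y'. feasII N vh x0' x' y' \<longrightarrow>
        objII N K vh r a mu n Psi x0' x' y' \<le> objII N K vh r a mu n Psi x0 x y)"

end

theory Submission
  imports Defs
begin

lemma eps_nonneg: "Psi > 0 \<Longrightarrow> eps N Psi n i \<ge> 0"
  unfolding eps_def by (intro divide_nonneg_nonneg mult_nonneg_nonneg) auto

lemma inner_sum:
  fixes N :: nat and vh :: "nat \<Rightarrow> real"
  assumes "T \<subseteq> {1..N}"
  shows "(\<Sum>j\<in>{1..N}. vh j * (if i \<in> T \<and> j \<in> T then c else 0))
         = (if i \<in> T then c * sum vh T else 0)"
proof (cases "i \<in> T")
  case True
  have "(\<Sum>j\<in>{1..N}. vh j * (if i \<in> T \<and> j \<in> T then c else 0))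
        = (\<Sum>j\<in>T. vh j * (if i \<in> T \<and> j \<in> T then c else 0))"
    by (rule sum.mono_neutral_right) (use assms finite_subset in auto)
  also have "\<dots> = (\<Sum>j\<in>T. vh j * c)" using True by simp
  finally show ?thesis using True by (simp add: sum_distrib_left mult.commute)
qed simp

lemma sum_ind:
  fixes N :: nat and vh :: "nat \<Rightarrow> real"
  assumes "T \<subseteq> {1..N}"
  shows "(\<Sum>j\<in>{1..N}. vh j * (if j \<in> T then c else 0)) = c * sum vh T"
proof -
  have "(\<Sum>j\<in>{1..N}. vh j * (if j \<in> T then c else 0)) = (\<Sum>j\<in>T. vh j * (if j \<in> T then c else 0))"
    by (rule sum.mono_neutral_right) (use assms finite_subset in auto)
  also have "\<dots> = (\<Sum>j\<in>T. vh j * c)" by simp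
  finally show ?thesis by (simp add: sum_distrib_left mult.commute)
qed

lemma objII_point:
  assumes T: "T \<subseteq> {1..N}" and x0: "x0' * (1 + sum vh T) = 1"
    and xe: "\<forall>i\<in>{1..N}. x' i = (if i \<in> T then x0' else 0)"
  shows "objII N K vh r a mu n Psi x0' x' (\<lambda>i j. if i \<in> T \<and> j \<in> T then x0' else 0)
         = objI N K vh r a mu n Psi T"
proof -
  have fin: "finite T" using T finite_subset by blast
  have ne: "1 + sum vh T \<noteq> 0" using x0 by auto
  have q: "vh i / (1 + sum vh T) = vh i * x0'" for i
  proof -
    have "x0' = 1 / (1 + sum vh T)" using x0 ne by (simp add: field_simps)
    then show ?thesis by simp
  qed
  let ?f = "\<lambda>i. r i * ((vh i + eps N Psi n i) * x' i + eps N Psi n i *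
              (\<Sum>j\<in>{1..N}. vh j * (if i \<in> T \<and> j \<in> T then x0' else 0)))
      - (\<Sum>k\<in>{1..K}. a i k * mu k *
           ((vh i - eps N Psi n i) * x' i - eps N Psi n i *
              (\<Sum>j\<in>{1..N}. vh j * (if i \<in> T \<and> j \<in> T then x0' else 0))))"
  have "objII N K vh r a mu n Psi x0' x' (\<lambda>i j. if i \<in> T \<and> j \<in> T then x0' else 0)
        = sum ?f {1..N}" unfolding objII_def by simp
  also have "\<dots> = sum ?f T"
    by (rule sum.mono_neutral_right) (use T xe inner_sum[OF T] in auto)
  also have "\<dots> = objI N K vh r a mu n Psi T"
    unfolding objI_def
  proof (rule sum.cong)
    fix i assume i: "i \<in> T"
    have xi: "x' i = x0'" using xe i T by auto
    have s: "(\<Sum>j\<in>{1..N}. vh j * (if i \<in> T \<and> j \<in> T then x0' else 0)) = x0' * sum vh T"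
      using inner_sum[OF T, of vh i x0'] i by simp
    have e1: "(vh i + eps N Psi n i) * x0' + eps N Psi n i * (x0' * sum vh T)
       = vh i * x0' + eps N Psi n i" using x0 by algebra
    have e2: "(vh i - eps N Psi n i) * x0' - eps N Psi n i * (x0' * sum vh T)
       = vh i * x0' - eps N Psi n i" using x0 by algebra
    show "?f i = r i * (vh i / (1 + sum vh T) + eps N Psi n i) -
         (\<Sum>k\<in>{1..K}. a i k * mu k * (vh i / (1 + sum vh T) - eps N Psi n i))"
      unfolding xi s e1 e2 q ..
  qed simp
  finally show ?thesis .
qed

lemma objII_mono_y:
  assumes Psi: "Psi > 0"
    and vh: "\<forall>i\<in>{1..N}. vh i > 0"
    and rr: "\<forall>i\<in>{1..N}. 0 \<le> r i"
    and ar: "\<forall>i\<in>{1..N}. \<forall>k\<in>{1..K}. 0 \<le> a i k"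
    and mu: "\<forall>k\<in>{1..K}. mu k \<ge> 0"
    and yy: "\<forall>i\<in>{1..N}. \<forall>j\<in>{1..N}. y i j \<le> y' i j"
  shows "objII N K vh r a mu n Psi x0 x y \<le> objII N K vh r a mu n Psi x0 x y'"
  unfolding objII_def
proof (rule sum_mono)
  fix i assume i: "i \<in> {1..N}"
  define e where "e = eps N Psi n i"
  have e: "e \<ge> 0" using eps_nonneg[OF Psi] e_def by simp
  define Y where "Y = (\<Sum>j\<in>{1..N}. vh j * y i j)"
  define Y' where "Y' = (\<Sum>j\<in>{1..N}. vh j * y' i j)"
  have YY: "Y \<le> Y'" unfolding Y_def Y'_def
    by (rule sum_mono) (use vh yy i in \<open>auto intro: mult_left_mono less_imp_le\<close>)
  have 1: "r i * ((vh i + e) * x i + e * Y) \<le> r i * ((vh i + e) * x i + e * Y')"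
    using rr i e YY by (intro mult_left_mono) (auto intro: mult_left_mono)
  have 2: "(\<Sum>k\<in>{1..K}. a i k * mu k * ((vh i - e) * x i - e * Y'))
        \<le> (\<Sum>k\<in>{1..K}. a i k * mu k * ((vh i - e) * x i - e * Y))"
    by (rule sum_mono) (use ar mu i e YY in \<open>auto intro!: mult_left_mono\<close>)
  show "r i * ((vh i + eps N Psi n i) * x i + eps N Psi n i * (\<Sum>j\<in>{1..N}. vh j * y i j)) -
         (\<Sum>k\<in>{1..K}. a i k * mu k * ((vh i - eps N Psi n i) * x i - eps N Psi n i * (\<Sum>j\<in>{1..N}. vh j * y i j)))
        \<le> r i * ((vh i + eps N Psi n i) * x i + eps N Psi n i * (\<Sum>j\<in>{1..N}. vh j * y' i j)) -
         (\<Sum>k\<in>{1..K}. a i k * mu k * ((vh i - eps N Psi n i) * x i - eps N Psi n i * (\<Sum>j\<in>{1..N}. vh j * y' i j)))"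
    using 1 2 unfolding e_def[symmetric] Y_def[symmetric] Y'_def[symmetric] by linarith
qed


lemma x0_pos:
  fixes N :: nat and vh :: "nat \<Rightarrow> real"
  assumes f: "feasII N vh x0 x y"
  shows "x0 > 0"
proof (rule ccontr)
  assume "\<not> x0 > 0"
  then have "\<forall>i\<in>{1..N}. x i = 0" using f unfolding feasII_def by force
  then have "(\<Sum>i\<in>{1..N}. vh i * x i) = 0" by simp
  then have "x0 = 1" using f unfolding feasII_def by simp
  with \<open>\<not> x0 > 0\<close> show False by simp
qed

lemma two_valued:
  fixes N :: nat and vh :: "nat \<Rightarrow> real"
  assumes vh: "\<forall>i\<in>{1..N}. vh i > 0"
    and b: "basicII N vh x0 x y"
    and i0: "i0 \<in> {1..N}"
  shows "x i0 = 0 \<or> x i0 = x0"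
proof (rule ccontr)
  assume H: "\<not> (x i0 = 0 \<or> x i0 = x0)"
  have f: "feasII N vh x0 x y" using b unfolding basicII_def by simp
  have x0p: "x0 > 0" by (rule x0_pos[OF f])
  define \<alpha> where "\<alpha> = x i0"
  have a0: "\<alpha> \<noteq> 0" "\<alpha> \<noteq> x0" using H \<alpha>_def by auto
  define A where "A = (\<Sum>i\<in>{1..N}. vh i * (if x i = \<alpha> then 1 else 0))"
  define B where "B = (\<Sum>i\<in>{1..N}. vh i * (if x i = x0 then 1 else 0))"
  have B0: "B \<ge> 0" unfolding B_def by (rule sum_nonneg) (use vh in \<open>auto simp: less_imp_le\<close>)
  define \<delta> where "\<delta> = - A / (1 + B)"
  define g where "g = (\<lambda>v::real. (if v = \<alpha> then 1 else 0) + \<delta> * (if v = x0 then 1 else 0))"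
  have g0: "g 0 = 0" using a0 x0p unfolding g_def by auto
  have gx0: "g x0 = \<delta>" using a0 unfolding g_def by auto
  have ga: "g \<alpha> = 1" using a0 unfolding g_def by auto
  have sumg: "(\<Sum>i\<in>{1..N}. vh i * g (x i)) = A + \<delta> * B"
    unfolding A_def B_def g_def by (simp add: sum.distrib sum_distrib_left algebra_simps)
  have "\<delta> * (1 + B) = - A" unfolding \<delta>_def using B0 by simp
  then have c1: "\<delta> + (\<Sum>i\<in>{1..N}. vh i * g (x i)) = 0" unfolding sumg by algebra
  have "\<delta> = 0 \<and> (\<forall>i\<in>{1..N}. g (x i) = 0) \<and> (\<forall>i\<in>{1..N}. \<forall>j\<in>{1..N}. g (y i j) = 0)"
    using b unfolding basicII_def
    apply (elim conjE)
    apply (drule spec[of _ \<delta>], drule spec[of _ "\<lambda>i. g (x i)"], drule spec[of _ "\<lambda>i j. g (y i j)"])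
    using c1 g0 gx0 by auto
  then have "g (x i0) = 0" using i0 by blast
  then show False using ga \<alpha>_def by simp
qed

theorem theoremC1:
  fixes N K :: nat and vh r :: "nat \<Rightarrow> real" and a :: "nat \<Rightarrow> nat \<Rightarrow> real"
    and mu :: "nat \<Rightarrow> real" and n :: "nat \<Rightarrow> nat" and Psi :: real
    and x0 :: real and x :: "nat \<Rightarrow> real" and y :: "nat \<Rightarrow> nat \<Rightarrow> real"
  assumes vh_pos: "\<forall>i\<in>{1..N}. vh i > 0"
    and r_range: "\<forall>i\<in>{1..N}. 0 \<le> r i \<and> r i \<le> 1"
    and a_range: "\<forall>i\<in>{1..N}. \<forall>k\<in>{1..K}. 0 \<le> a i k \<and> a i k \<le> 1"
    and mu_nonneg: "\<forall>k\<in>{1..K}. mu k \<ge> 0"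
    and n_pos: "\<forall>i\<in>{1..N}. n i > 0"
    and Psi_pos: "Psi > 0"
    and basic: "basicII N vh x0 x y"
    and opt: "optimalII N K vh r a mu n Psi x0 x y"
  shows "optimalI N K vh r a mu n Psi {i \<in> {1..N}. x i \<noteq> 0}"
proof -
  define S where "S = {i \<in> {1..N}. x i \<noteq> 0}"
  have f: "feasII N vh x0 x y" using opt unfolding optimalII_def by simp
  have S: "S \<subseteq> {1..N}" unfolding S_def by auto
  have xS: "\<forall>i\<in>{1..N}. x i = (if i \<in> S then x0 else 0)"
    using two_valued[OF vh_pos basic] unfolding S_def by force
  have "(\<Sum>i\<in>{1..N}. vh i * x i) = (\<Sum>i\<in>{1..N}. vh i * (if i \<in> S then x0 else 0))"
    using xS by (intro sum.cong) auto
  also have "\<dots> = x0 * sum vh S" by (rule sum_ind[OF S])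
  finally have "x0 + x0 * sum vh S = 1" using f unfolding feasII_def by simp
  then have x0S: "x0 * (1 + sum vh S) = 1" by (simp add: algebra_simps)
  have yle: "\<forall>i\<in>{1..N}. \<forall>j\<in>{1..N}. y i j \<le> (if i \<in> S \<and> j \<in> S then x0 else 0)"
  proof (intro ballI)
    fix i j assume i: "i \<in> {1..N}" and j: "j \<in> {1..N}"
    have "y i j \<le> x i" "y i j \<le> x j" using f i j unfolding feasII_def by auto
    then show "y i j \<le> (if i \<in> S \<and> j \<in> S then x0 else 0)" using xS i j by auto
  qed
  have upper: "objII N K vh r a mu n Psi x0 x y \<le> objI N K vh r a mu n Psi S"
  proof -
    have "objII N K vh r a mu n Psi x0 x y
       \<le> objII N K vh r a mu n Psi x0 x (\<lambda>i j. if i \<in> S \<and> j \<in> S then x0 else 0)"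
      by (rule objII_mono_y) (use Psi_pos vh_pos r_range a_range mu_nonneg yle in auto)
    also have "\<dots> = objI N K vh r a mu n Psi S" by (rule objII_point[OF S x0S xS])
    finally show ?thesis .
  qed
  have "objI N K vh r a mu n Psi T \<le> objI N K vh r a mu n Psi S" if T: "T \<subseteq> {1..N}" for T
  proof -
    have finT: "finite T" using T finite_subset by blast
    have VT: "sum vh T \<ge> 0" by (rule sum_nonneg) (use T vh_pos in \<open>auto simp: less_imp_le\<close>)
    define z0 where "z0 = 1 / (1 + sum vh T)"
    have z0T: "z0 * (1 + sum vh T) = 1" unfolding z0_def using VT by simp
    have z0p: "z0 \<ge> 0" unfolding z0_def using VT by simp
    define z where "z = (\<lambda>i. if i \<in> T then z0 else 0)"
    define w where "w = (\<lambda>i j. if i \<in> T \<and> j \<in> T then z0 else 0)"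
    have sz: "(\<Sum>i\<in>{1..N}. vh i * z i) = z0 * sum vh T"
      unfolding z_def by (rule sum_ind[OF T])
    have fT: "feasII N vh z0 z w"
      unfolding feasII_def using sz z0T z0p by (auto simp: z_def w_def algebra_simps)
    have "objI N K vh r a mu n Psi T = objII N K vh r a mu n Psi z0 z w"
      unfolding w_def by (rule objII_point[OF T z0T, symmetric]) (simp add: z_def)
    also have "\<dots> \<le> objII N K vh r a mu n Psi x0 x y" using opt fT unfolding optimalII_def by blast
    also have "\<dots> \<le> objI N K vh r a mu n Psi S" by (rule upper)
    finally show ?thesis .
  qed
  then show ?thesis using S unfolding optimalI_def S_def by blast
qed

end
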